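(* Let $x_0\in(0,1)$ and let $0<T\le T_0$. Assume that $u_0\in L^2(0,1)$ is not pointwise null-controllable at $x_0$ in time $T$. For $\varepsilon>0$ with $(x_0-\varepsilon,x_0+\varepsilon)\subset(0,1)$, let $\psi_\varepsilon$ be the optimal $L^2$ null-control of $u_0$ in time $T$ with control domain $(x_0-\varepsilon,x_0+\varepsilon)$. Then $\varepsilon^{1/2}\|\psi_\varepsilon\|_{L^2((0,T)\times(0,1))}\to+\infty$ as $\varepsilon\to0$.
   Context: Consider the heat equation on $(0,1)$ with Dirichlet boundary conditions: $\partial_t u-\partial_{xx}u=f$ in $(0,T)\times(0,1)$, $u(t,0)=u(t,1)=0$, $u(0,\cdot)=u_0\in L^2(0,1)$. A null-control of $u_0$ in time $T$ with control domain $\omega\subset(0,1)$ is an $f\in L^2((0,T)\times(0,1))$ supported in $(0,T)\times\omega$ such that the solution satisfies $u(T,\cdot)=0$; the optimal $L^2$ null-control is the one of minimal $L^2((0,T)\times(0,1))$ norm (it exists since the equation is null-controllable on any open interval in any time). $u_0$ is pointwise null-controllable at $x_0$ in time $T$ if there exists $\psi\in L^2(0,T)$ such that the (well-posed, in $C^0([0,T],L^2(0,1))\cap L^2((0,T),H^1_0(0,1))$) solution with $f(t,\cdot)=\psi(t)\delta_{x_0}$ satisfies $u(T,\cdot)=0$. The heat equation is pointwise observable at $x_0$ in time $T$ if $\inf\{\int_0^T u(t,x_0)^2dt:\ \|u_0\|_{L^2}=1,\ u\text{ solution with } f=0\}>0$. $T_0=T_0(x_0)=\inf\{T>0:\text{pointwise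 observable at }x_0\text{ in time }T\}\in[0,+\infty]$ ($\inf\emptyset=+\infty$). *)

theory Defs
  imports "HOL-Analysis.Analysis"
begin

text \<open>The Dirichlet Laplacian has the orthonormal eigenbasis e_k(x) = sqrt 2 sin(k pi x),
  k >= 1, with eigenvalues (k pi)^2. A state in L2(0,1) is identified with its
  coefficient sequence; the (weak/mild) solution is given by Duhamel's formula
  coefficientwise.\<close>

definition sin_basis :: "nat \<Rightarrow> real \<Rightarrow> real" where
  "sin_basis k x = sqrt 2 * sin (real k * pi * x)"

definition eigval :: "nat \<Rightarrow> real" where
  "eigval k = (real k * pi)^2"

definition is_L2_01 :: "(real \<Rightarrow> real) \<Rightarrow> bool" where
  "is_L2_01 u0 \<longleftrightarrow> u0 \<in> borel_measurable lborel \<and>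
     set_integrable lborel {0<..<1} (\<lambda>x. (u0 x)^2)"

definition L2norm_01 :: "(real \<Rightarrow> real) \<Rightarrow> real" where
  "L2norm_01 u0 = sqrt (LINT x:{0<..<1}|lborel. (u0 x)^2)"

definition coeff :: "(real \<Rightarrow> real) \<Rightarrow> nat \<Rightarrow> real" where
  "coeff u0 k = (LINT x:{0<..<1}|lborel. u0 x * sin_basis k x)"

definition is_L2_QT :: "real \<Rightarrow> (real \<Rightarrow> real \<Rightarrow> real) \<Rightarrow> bool" where
  "is_L2_QT T f \<longleftrightarrow> (\<lambda>(t,x). f t x) \<in> borel_measurable (lborel \<Otimes>\<^sub>M lborel) \<and>
     set_integrable (lborel \<Otimes>\<^sub>M lborel) ({0<..<T} \<times> {0<..<1}) (\<lambda>(t,x). (f t x)^2)"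

definition L2norm_QT :: "real \<Rightarrow> (real \<Rightarrow> real \<Rightarrow> real) \<Rightarrow> real" where
  "L2norm_QT T f = sqrt (LINT z:({0<..<T} \<times> {0<..<1})|(lborel \<Otimes>\<^sub>M lborel). (case z of (t,x) \<Rightarrow> (f t x)^2))"

text \<open>k-th coefficient of u(T) for the solution with initial datum u0 and source f\<close>
definition final_coeff :: "real \<Rightarrow> (real \<Rightarrow> real) \<Rightarrow> (real \<Rightarrow> real \<Rightarrow> real) \<Rightarrow> nat \<Rightarrow> real" where
  "final_coeff T u0 f k = exp (- eigval k * T) * coeff u0 k +
     (LINT s:{0<..<T}|lborel. exp (- eigval k * (T - s)) *
        (LINT x:{0<..<1}|lborel. f s x * sin_basis k x))"

definition null_control :: "real \<Rightarrow> real set \<Rightarrow> (real \<Rightarrow> real) \<Rightarrow> (real \<Rightarrow> real \<Rightarrow> real) \<Rightarrow> bool" where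
  "null_control T \<omega> u0 f \<longleftrightarrow> is_L2_QT T f \<and> (\<forall>t x. x \<notin> \<omega> \<longrightarrow> f t x = 0) \<and>
     (\<forall>k\<ge>1. final_coeff T u0 f k = 0)"

definition optimal_null_control :: "real \<Rightarrow> real set \<Rightarrow> (real \<Rightarrow> real) \<Rightarrow> (real \<Rightarrow> real \<Rightarrow> real) \<Rightarrow> bool" where
  "optimal_null_control T \<omega> u0 f \<longleftrightarrow> null_control T \<omega> u0 f \<and>
     (\<forall>g. null_control T \<omega> u0 g \<longrightarrow> L2norm_QT T f \<le> L2norm_QT T g)"

text \<open>Control f(t,.) = psi(t) delta_{x0}: its k-th coefficient is psi(t) e_k(x0).\<close>
definition pointwise_null_controllable :: "real \<Rightarrow> real \<Rightarrow> (real \<Rightarrow> real) \<Rightarrow> bool" where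
  "pointwise_null_controllable x0 T u0 \<longleftrightarrow> (\<exists>\<psi>. \<psi> \<in> borel_measurable lborel \<and>
     set_integrable lborel {0<..<T} (\<lambda>t. (\<psi> t)^2) \<and>
     (\<forall>k\<ge>1. exp (- eigval k * T) * coeff u0 k +
        sin_basis k x0 * (LINT s:{0<..<T}|lborel. exp (- eigval k * (T - s)) * \<psi> s) = 0))"

definition free_sol :: "(real \<Rightarrow> real) \<Rightarrow> real \<Rightarrow> real \<Rightarrow> real" where
  "free_sol u0 t x = (\<Sum>k. exp (- eigval (Suc k) * t) * coeff u0 (Suc k) * sin_basis (Suc k) x)"

definition pointwise_observable :: "real \<Rightarrow> real \<Rightarrow> bool" where
  "pointwise_observable x0 T \<longleftrightarrow>
     (INF u0 \<in> {u0. is_L2_01 u0 \<and> L2norm_01 u0 = 1}.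
        (\<integral>\<^sup>+ t. ennreal ((free_sol u0 t x0)^2) * indicator {0<..<T} t \<partial>lborel)) > 0"

definition T0 :: "real \<Rightarrow> ereal" where
  "T0 x0 = Inf {ereal T | T. T > 0 \<and> pointwise_observable x0 T}"

end

theory Submission
  imports Defs "HOL-Analysis.Analysis"
begin

definition sqi :: "'a measure \<Rightarrow> ('a \<Rightarrow> real) \<Rightarrow> bool" where
  "sqi M f \<longleftrightarrow> f \<in> borel_measurable M \<and> integrable M (\<lambda>x. (f x)^2)"

definition ipr :: "'a measure \<Rightarrow> ('a \<Rightarrow> real) \<Rightarrow> ('a \<Rightarrow> real) \<Rightarrow> real" where
  "ipr M f g = (\<integral>x. f x * g x \<partial>M)"

lemma sqi_meas: "sqi M f \<Longrightarrow> f \<in> borel_measurable M"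
  by (simp add: sqi_def)

lemma sqi_prod_int:
  assumes "sqi M f" "sqi M g"
  shows "integrable M (\<lambda>x. f x * g x)"
proof (rule Bochner_Integration.integrable_bound[of _ "\<lambda>x. (f x)^2 + (g x)^2"])
  show "integrable M (\<lambda>x. (f x)^2 + (g x)^2)" using assms by (auto simp: sqi_def)
  show "(\<lambda>x. f x * g x) \<in> borel_measurable M" using assms by (auto simp: sqi_def)
  show "AE x in M. norm (f x * g x) \<le> norm ((f x)^2 + (g x)^2)"
  proof (intro AE_I2)
    fix x
    have "2 * \<bar>f x * g x\<bar> \<le> (f x)^2 + (g x)^2"
    proof -
      have "0 \<le> (\<bar>f x\<bar> - \<bar>g x\<bar>)^2" by simp
      then show ?thesis by (simp add: power2_eq_square algebra_simps abs_mult)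
    qed
    moreover have "norm (f x * g x) = \<bar>f x\<bar> * \<bar>g x\<bar>" by (simp add: abs_mult)
    moreover have "norm ((f x)^2 + (g x)^2) = (f x)^2 + (g x)^2" by simp
    moreover have "0 \<le> \<bar>f x\<bar> * \<bar>g x\<bar>" by simp
    ultimately show "norm (f x * g x) \<le> norm ((f x)^2 + (g x)^2)" by linarith
  qed
qed

lemma sqi_add: "sqi M f \<Longrightarrow> sqi M g \<Longrightarrow> sqi M (\<lambda>x. f x + g x)"
proof -
  assume f: "sqi M f" and g: "sqi M g"
  have "integrable M (\<lambda>x. 2 * (f x * g x))" using sqi_prod_int[OF f g] by simp
  then have "integrable M (\<lambda>x. (f x)^2 + (g x)^2 + 2 * f x * g x)"
    using f g by (auto simp: sqi_def mult.assoc)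
  moreover have "(\<lambda>x. f x + g x) \<in> borel_measurable M" using f g by (auto simp: sqi_def)
  ultimately show ?thesis by (simp add: sqi_def power2_sum)
qed

lemma sqi_scale: "sqi M f \<Longrightarrow> sqi M (\<lambda>x. c * f x)"
  unfolding sqi_def by (auto simp: power_mult_distrib)

lemma sqi_minus: "sqi M f \<Longrightarrow> sqi M (\<lambda>x. - f x)"
  using sqi_scale[of M f "-1"] by simp

lemma sqi_diff: "sqi M f \<Longrightarrow> sqi M g \<Longrightarrow> sqi M (\<lambda>x. f x - g x)"
  using sqi_add[of M f "\<lambda>x. - g x"] sqi_minus[of M g] by simp

lemma sqi_zero: "sqi M (\<lambda>x. 0)"
  unfolding sqi_def by simp

lemma sqi_sum: "(\<And>i. i \<in> A \<Longrightarrow> sqi M (f i)) \<Longrightarrow> sqi M (\<lambda>x. \<Sum>i\<in>A. f i x)"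
proof (induction A rule: infinite_finite_induct)
  case (infinite A) then show ?case by (simp add: sqi_zero)
next
  case empty then show ?case by (simp add: sqi_zero)
next
  case (insert a A)
  then show ?case using sqi_add[of M "f a" "\<lambda>x. \<Sum>i\<in>A. f i x"] by simp
qed

lemma ipr_sym: "ipr M f g = ipr M g f"
  unfolding ipr_def by (simp add: mult.commute)

lemma ipr_add_left: "sqi M f \<Longrightarrow> sqi M g \<Longrightarrow> sqi M k \<Longrightarrow>
   ipr M (\<lambda>x. f x + g x) k = ipr M f k + ipr M g k"
  unfolding ipr_def by (simp add: distrib_right sqi_prod_int)

lemma ipr_diff_left: "sqi M f \<Longrightarrow> sqi M g \<Longrightarrow> sqi M k \<Longrightarrow>
   ipr M (\<lambda>x. f x - g x) k = ipr M f k - ipr M g k"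
  unfolding ipr_def by (simp add: left_diff_distrib sqi_prod_int)

lemma ipr_scale_left: "ipr M (\<lambda>x. c * f x) k = c * ipr M f k"
  unfolding ipr_def by (simp add: mult.assoc)

lemma ipr_sum_left: "(\<And>i. i \<in> A \<Longrightarrow> sqi M (f i)) \<Longrightarrow> sqi M k \<Longrightarrow>
   ipr M (\<lambda>x. \<Sum>i\<in>A. f i x) k = (\<Sum>i\<in>A. ipr M (f i) k)"
  unfolding ipr_def sum_distrib_right
  by (subst Bochner_Integration.integral_sum) (auto simp: sqi_prod_int)

lemma ipr_add_right: "sqi M f \<Longrightarrow> sqi M g \<Longrightarrow> sqi M k \<Longrightarrow>
   ipr M k (\<lambda>x. f x + g x) = ipr M k f + ipr M k g"
  by (simp add: ipr_sym[of M k] ipr_add_left)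

lemma ipr_diff_right: "sqi M f \<Longrightarrow> sqi M g \<Longrightarrow> sqi M k \<Longrightarrow>
   ipr M k (\<lambda>x. f x - g x) = ipr M k f - ipr M k g"
  by (simp add: ipr_sym[of M k] ipr_diff_left)

lemma ipr_scale_right: "ipr M k (\<lambda>x. c * f x) = c * ipr M k f"
  by (simp add: ipr_sym[of M k] ipr_scale_left)

lemma ipr_sum_right: "(\<And>i. i \<in> A \<Longrightarrow> sqi M (f i)) \<Longrightarrow> sqi M k \<Longrightarrow>
   ipr M k (\<lambda>x. \<Sum>i\<in>A. f i x) = (\<Sum>i\<in>A. ipr M k (f i))"
  by (simp add: ipr_sym[of M k] ipr_sum_left)

lemma ipr_zero_left[simp]: "ipr M (\<lambda>x. 0) k = 0"
  unfolding ipr_def by simp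

lemma ipr_zero_right[simp]: "ipr M k (\<lambda>x. 0) = 0"
  unfolding ipr_def by simp

lemma ipr_self_nonneg: "0 \<le> ipr M f f"
  unfolding ipr_def by (simp add: integral_nonneg_AE)

lemma ipr_self_eq: "ipr M f f = (\<integral>x. (f x)^2 \<partial>M)"
  unfolding ipr_def by (simp add: power2_eq_square)

lemma ipr_CS:
  assumes f: "sqi M f" and g: "sqi M g"
  shows "(ipr M f g)^2 \<le> ipr M f f * ipr M g g"
proof -
  have q: "0 \<le> ipr M f f - 2 * t * ipr M f g + t^2 * ipr M g g" for t
  proof -
    have s: "sqi M (\<lambda>x. t * g x)" using g by (rule sqi_scale)
    have "0 \<le> ipr M (\<lambda>x. f x - t * g x) (\<lambda>x. f x - t * g x)" by (rule ipr_self_nonneg)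
    also have "\<dots> = ipr M f f - 2 * t * ipr M f g + t^2 * ipr M g g"
      using f g s sqi_diff[OF f s]
      by (simp add: ipr_diff_left ipr_diff_right ipr_scale_left ipr_scale_right ipr_sym[of M g f]
            power2_eq_square algebra_simps)
    finally show ?thesis .
  qed
  show ?thesis
  proof (cases "ipr M g g = 0")
    case True
    have "ipr M f g = 0"
    proof (rule ccontr)
      assume ne: "ipr M f g \<noteq> 0"
      have "0 \<le> ipr M f f - 2 * ((ipr M f f + 1) / (2 * ipr M f g)) * ipr M f g"
        using q[of "(ipr M f f + 1) / (2 * ipr M f g)"] True by simp
      then show False using ne by (simp add: field_simps)
    qed
    then show ?thesis using True by simp
  next
    case False
    then have pos: "ipr M g g > 0" using ipr_self_nonneg[of M g] by simp
    have "0 \<le> ipr M f f - 2 * (ipr M f g / ipr M g g) * ipr M f g + (ipr M f g / ipr M g g)^2 * ipr M g g"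
      by (rule q)
    also have "\<dots> = ipr M f f - (ipr M f g)^2 / ipr M g g"
      using pos by (simp add: field_simps power2_eq_square)
    finally show ?thesis using pos by (simp add: field_simps)
  qed
qed

lemma ipr_CS_abs:
  assumes f: "sqi M f" and g: "sqi M g"
  shows "\<bar>ipr M f g\<bar> \<le> sqrt (ipr M f f) * sqrt (ipr M g g)"
proof -
  have "\<bar>ipr M f g\<bar> = sqrt ((ipr M f g)^2)" by simp
  also have "\<dots> \<le> sqrt (ipr M f f * ipr M g g)" using ipr_CS[OF f g] by (rule real_sqrt_le_mono)
  finally show ?thesis by (simp add: real_sqrt_mult)
qed

lemma ipr_null:
  assumes f: "sqi M f" and g: "sqi M g" and "ipr M f f = 0"
  shows "ipr M f g = 0"
  using ipr_CS[OF f g] assms(3) by simp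

locale gs_setup = finite_measure M for M :: "'a measure" +
  fixes h :: "nat \<Rightarrow> 'a \<Rightarrow> real"
  assumes h_sq: "\<And>k. sqi M (h k)"
begin

function E :: "nat \<Rightarrow> 'a \<Rightarrow> real" where
  "E j = (let u = (\<lambda>x. h j x - (\<Sum>i<j. ipr M (h j) (E i) * E i x)) in
          if ipr M u u > 0 then (\<lambda>x. u x / sqrt (ipr M u u)) else (\<lambda>x. 0))"
  by pat_completeness auto
termination by (relation "Wellfounded.measure id") auto

declare E.simps[simp del]

definition u :: "nat \<Rightarrow> 'a \<Rightarrow> real" where
  "u j = (\<lambda>x. h j x - (\<Sum>i<j. ipr M (h j) (E i) * E i x))"

definition nz :: "nat \<Rightarrow> bool" where
  "nz j \<longleftrightarrow> ipr M (u j) (u j) > 0"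

lemma E_eq: "E j = (if nz j then (\<lambda>x. inverse (sqrt (ipr M (u j) (u j))) * u j x) else (\<lambda>x. 0))"
  by (subst E.simps) (auto simp: u_def nz_def Let_def field_simps)

lemma E_zero: "\<not> nz j \<Longrightarrow> E j = (\<lambda>x. 0)"
  by (simp add: E_eq)

lemma E_sq: "sqi M (E j)"
proof (induction j rule: less_induct)
  case (less j)
  have "sqi M (u j)"
    unfolding u_def
    by (intro sqi_diff h_sq sqi_sum sqi_scale less) auto
  then show ?case
    by (simp add: E_eq sqi_scale sqi_zero)
qed

lemma u_sq: "sqi M (u j)"
  unfolding u_def by (intro sqi_diff h_sq sqi_sum sqi_scale E_sq)

lemma u_ipr: "sqi M g \<Longrightarrow>
   ipr M (u j) g = ipr M (h j) g - (\<Sum>i<j. ipr M (h j) (E i) * ipr M (E i) g)"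
proof -
  assume g: "sqi M g"
  have s: "sqi M (\<lambda>x. \<Sum>i<j. ipr M (h j) (E i) * E i x)"
    by (intro sqi_sum sqi_scale E_sq)
  have "ipr M (\<lambda>x. \<Sum>i<j. ipr M (h j) (E i) * E i x) g = (\<Sum>i<j. ipr M (\<lambda>x. ipr M (h j) (E i) * E i x) g)"
    by (rule ipr_sum_left) (auto intro!: sqi_scale E_sq g)
  also have "\<dots> = (\<Sum>i<j. ipr M (h j) (E i) * ipr M (E i) g)"
    by (simp add: ipr_scale_left)
  finally show ?thesis unfolding u_def
    by (subst ipr_diff_left) (auto intro!: h_sq s g)
qed

lemma E_scaled: "nz j \<Longrightarrow> u j x = sqrt (ipr M (u j) (u j)) * E j x"
  using ipr_self_nonneg[of M "u j"] by (simp add: E_eq nz_def)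

lemma ortho_step:
  assumes IH: "\<And>i l. i < j \<Longrightarrow> l < j \<Longrightarrow> ipr M (E i) (E l) = (if i = l \<and> nz i then 1 else 0)"
    and "i < j"
  shows "ipr M (u j) (E i) = 0"
proof -
  have "ipr M (u j) (E i) = ipr M (h j) (E i) - (\<Sum>l<j. ipr M (h j) (E l) * ipr M (E l) (E i))"
    by (rule u_ipr[OF E_sq])
  also have "(\<Sum>l<j. ipr M (h j) (E l) * ipr M (E l) (E i)) =
      (\<Sum>l<j. if l = i then (if nz i then ipr M (h j) (E i) else 0) else 0)"
    by (intro sum.cong refl) (auto simp: IH assms(2))
  also have "\<dots> = (if nz i then ipr M (h j) (E i) else 0)"
    using assms(2) by (simp add: sum.delta)
  also have "ipr M (h j) (E i) - \<dots> = 0"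
    by (auto simp: E_zero)
  finally show ?thesis .
qed

lemma ortho_all: "\<forall>i<n. \<forall>l<n. ipr M (E i) (E l) = (if i = l \<and> nz i then 1 else 0)"
proof (induction n)
  case 0 then show ?case by simp
next
  case (Suc n)
  have new: "ipr M (E n) (E i) = 0" if "i < n" for i
  proof (cases "nz n")
    case True
    have "ipr M (E n) (E i) = inverse (sqrt (ipr M (u n) (u n))) * ipr M (u n) (E i)"
      using True by (simp add: E_eq ipr_scale_left)
    also have "ipr M (u n) (E i) = 0"
      using Suc.IH that by (intro ortho_step[of n i]) auto
    finally show ?thesis by simp
  next
    case False then show ?thesis by (simp add: E_zero)
  qed
  have self: "ipr M (E n) (E n) = (if nz n then 1 else 0)"
  proof (cases "nz n")
    case True
    then have pos: "ipr M (u n) (u n) > 0" by (simp add: nz_def)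
    have "ipr M (E n) (E n) = inverse (sqrt (ipr M (u n) (u n))) * inverse (sqrt (ipr M (u n) (u n))) * ipr M (u n) (u n)"
      using True by (simp add: E_eq ipr_scale_left ipr_scale_right)
    also have "\<dots> = 1" using pos
      by (simp add: field_simps)
    finally show ?thesis using True by simp
  next
    case False then show ?thesis by (simp add: E_zero)
  qed
  show ?case
  proof (intro allI impI)
    fix i l assume i: "i < Suc n" and l: "l < Suc n"
    show "ipr M (E i) (E l) = (if i = l \<and> nz i then 1 else 0)"
    proof (cases "i = n")
      case True
      then show ?thesis using new[of l] self l by (cases "l = n") auto
    next
      case False
      then have i': "i < n" using i by simp
      show ?thesis
      proof (cases "l = n")
        case True
        then show ?thesis using new[of i] i' ipr_sym[of M "E i" "E n"] by auto
      next
        case False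
        then show ?thesis using Suc.IH i' l by auto
      qed
    qed
  qed
qed

lemma ortho: "ipr M (E i) (E l) = (if i = l \<and> nz i then 1 else 0)"
  using ortho_all[of "Suc (max i l)"] by auto

lemma u_ipr_E: "i < j \<Longrightarrow> ipr M (u j) (E i) = 0"
  by (rule ortho_step) (simp add: ortho)

lemma hE_self: "nz k \<Longrightarrow> ipr M (h k) (E k) = sqrt (ipr M (u k) (u k))"
proof -
  assume nzk: "nz k"
  have "ipr M (u k) (E k) = ipr M (h k) (E k) - (\<Sum>i<k. ipr M (h k) (E i) * ipr M (E i) (E k))"
    by (rule u_ipr[OF E_sq])
  also have "(\<Sum>i<k. ipr M (h k) (E i) * ipr M (E i) (E k)) = 0"
    by (intro sum.neutral) (auto simp: ortho)
  finally have 1: "ipr M (u k) (E k) = ipr M (h k) (E k)" by simp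
  define s where "s = sqrt (ipr M (u k) (u k))"
  have ue: "u k = (\<lambda>x. s * E k x)" using E_scaled[OF nzk] unfolding s_def by (rule ext)
  have "ipr M (u k) (E k) = sqrt (ipr M (u k) (u k)) * ipr M (E k) (E k)"
    unfolding s_def[symmetric] by (simp only: ue ipr_scale_left)
  then show ?thesis using 1 nzk by (simp add: ortho)
qed

lemma hE_pos: "nz k \<Longrightarrow> ipr M (h k) (E k) > 0"
  by (simp add: hE_self nz_def)

lemma h_expand:
  assumes g: "sqi M g"
  shows "ipr M (h k) g = (\<Sum>i<Suc k. ipr M (h k) (E i) * ipr M (E i) g)"
proof -
  have uk: "ipr M (u k) g = ipr M (h k) (E k) * ipr M (E k) g"
  proof (cases "nz k")
    case True
    define s where "s = sqrt (ipr M (u k) (u k))"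
    have ue: "u k = (\<lambda>x. s * E k x)" using E_scaled[OF True] unfolding s_def by (rule ext)
    have "ipr M (u k) g = s * ipr M (E k) g"
      by (simp only: ue ipr_scale_left)
    then show ?thesis using hE_self[OF True] unfolding s_def by simp
  next
    case False
    then have "ipr M (u k) (u k) = 0" using ipr_self_nonneg[of M "u k"] by (simp add: nz_def)
    then have "ipr M (u k) g = 0" by (rule ipr_null[OF u_sq g])
    then show ?thesis using False by (simp add: E_zero)
  qed
  show ?thesis using u_ipr[OF g, of k] uk by simp
qed

lemma hE_above: "k < j \<Longrightarrow> ipr M (h k) (E j) = 0"
proof -
  assume kj: "k < j"
  have "ipr M (h k) (E j) = (\<Sum>i<Suc k. ipr M (h k) (E i) * ipr M (E i) (E j))"
    by (rule h_expand[OF E_sq])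
  also have "\<dots> = 0" using kj by (intro sum.neutral) (auto simp: ortho)
  finally show ?thesis .
qed

lemma comb_sq: "sqi M (\<lambda>x. \<Sum>l\<in>A. a l * E l x)"
  by (intro sqi_sum sqi_scale E_sq)

lemma ipr_E_comb:
  assumes "finite A" "\<And>l. l \<in> A \<Longrightarrow> \<not> nz l \<Longrightarrow> a l = 0"
  shows "ipr M (E j) (\<lambda>x. \<Sum>l\<in>A. a l * E l x) = (if j \<in> A then a j else 0)"
proof -
  have "ipr M (E j) (\<lambda>x. \<Sum>l\<in>A. a l * E l x) = (\<Sum>l\<in>A. a l * ipr M (E j) (E l))"
    by (subst ipr_sum_right) (auto intro!: sqi_scale E_sq simp: ipr_scale_right)
  also have "\<dots> = (\<Sum>l\<in>A. if l = j then a j else 0)"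
    using assms(2) by (intro sum.cong refl) (auto simp: ortho)
  also have "\<dots> = (if j \<in> A then a j else 0)"
    using assms(1) by (simp add: sum.delta')
  finally show ?thesis .
qed

lemma comb_norm:
  assumes "finite A" "\<And>l. l \<in> A \<Longrightarrow> \<not> nz l \<Longrightarrow> a l = 0"
  shows "ipr M (\<lambda>x. \<Sum>l\<in>A. a l * E l x) (\<lambda>x. \<Sum>l\<in>A. a l * E l x) = (\<Sum>l\<in>A. (a l)^2)"
proof -
  have "ipr M (\<lambda>x. \<Sum>l\<in>A. a l * E l x) (\<lambda>x. \<Sum>l\<in>A. a l * E l x)
      = (\<Sum>j\<in>A. a j * ipr M (E j) (\<lambda>x. \<Sum>l\<in>A. a l * E l x))"
    by (subst ipr_sum_left) (auto intro!: sqi_scale E_sq comb_sq simp: ipr_scale_left)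
  also have "\<dots> = (\<Sum>j\<in>A. (a j)^2)"
    using assms by (intro sum.cong refl) (simp add: ipr_E_comb power2_eq_square)
  finally show ?thesis .
qed

end

lemma sum_split_lt:
  fixes f :: "nat \<Rightarrow> 'b::comm_monoid_add"
  assumes "q \<le> p"
  shows "(\<Sum>j<p. f j) = (\<Sum>j<q. f j) + (\<Sum>j\<in>{q..<p}. f j)"
proof -
  have e: "{..<p} = {..<q} \<union> {q..<p}" using assms by auto
  show ?thesis by (subst e) (rule sum.union_disjoint; auto)
qed

lemma sqi_const: "finite_measure M \<Longrightarrow> sqi M (\<lambda>x. c)"
  unfolding sqi_def by (simp add: finite_measure.integrable_const)

lemma sqi_abs: "sqi M f \<Longrightarrow> sqi M (\<lambda>x. \<bar>f x\<bar>)"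
  unfolding sqi_def by auto

lemma ipr_self_ennreal:
  assumes "sqi M f"
  shows "(\<integral>\<^sup>+x. ennreal ((f x)^2) \<partial>M) = ennreal (ipr M f f)"
  using assms unfolding sqi_def ipr_self_eq
  by (intro nn_integral_eq_integral) auto

lemma L2_fatou:
  fixes G :: "nat \<Rightarrow> 'a \<Rightarrow> real"
  assumes G: "\<And>m. sqi M (G m)" and psi[measurable]: "\<psi> \<in> borel_measurable M"
    and lim: "AE x in M. (\<lambda>m. G m x) \<longlonglongrightarrow> \<psi> x"
    and bnd: "\<And>m. m \<ge> Nz \<Longrightarrow> ipr M (G m) (G m) \<le> \<delta>"
  shows "sqi M \<psi> \<and> ipr M \<psi> \<psi> \<le> \<delta>"
proof -
  have Gm[measurable]: "G m \<in> borel_measurable M" for m using G by (simp add: sqi_def)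
  have dpos: "0 \<le> \<delta>" using bnd[of Nz] ipr_self_nonneg[of M "G Nz"] by simp
  have "(\<integral>\<^sup>+x. ennreal ((\<psi> x)^2) \<partial>M) = (\<integral>\<^sup>+x. liminf (\<lambda>m. ennreal ((G m x)^2)) \<partial>M)"
  proof (rule nn_integral_cong_AE)
    show "AE x in M. ennreal ((\<psi> x)^2) = liminf (\<lambda>m. ennreal ((G m x)^2))"
      using lim
    proof eventually_elim
      case (elim x)
      have "(\<lambda>m. (G m x)^2) \<longlonglongrightarrow> (\<psi> x)^2"
        by (intro tendsto_power elim)
      then have "(\<lambda>m. ennreal ((G m x)^2)) \<longlonglongrightarrow> ennreal ((\<psi> x)^2)"
        by (rule tendsto_ennrealI)
      then show ?case using lim_imp_Liminf[OF sequentially_bot] by metis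
    qed
  qed
  also have "\<dots> \<le> liminf (\<lambda>m. \<integral>\<^sup>+x. ennreal ((G m x)^2) \<partial>M)"
    by (rule nn_integral_liminf) simp
  also have "\<dots> \<le> limsup (\<lambda>m. \<integral>\<^sup>+x. ennreal ((G m x)^2) \<partial>M)"
    by (rule Liminf_le_Limsup) simp
  also have "\<dots> \<le> ennreal \<delta>"
  proof (rule Limsup_bounded)
    show "\<forall>\<^sub>F m in sequentially. (\<integral>\<^sup>+x. ennreal ((G m x)^2) \<partial>M) \<le> ennreal \<delta>"
      unfolding eventually_sequentially
      using bnd by (auto simp: ipr_self_ennreal[OF G] intro!: exI[of _ Nz] ennreal_leI)
  qed
  finally have fin: "(\<integral>\<^sup>+x. ennreal ((\<psi> x)^2) \<partial>M) \<le> ennreal \<delta>" .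
  have int: "integrable M (\<lambda>x. (\<psi> x)^2)"
  proof (rule integrableI_bounded)
    show "(\<integral>\<^sup>+x. ennreal (norm ((\<psi> x)^2)) \<partial>M) < \<infinity>"
      using fin by (simp add: le_less_trans)
  qed simp
  then have sq: "sqi M \<psi>" by (simp add: sqi_def)
  have "ennreal (ipr M \<psi> \<psi>) \<le> ennreal \<delta>" using fin ipr_self_ennreal[OF sq] by simp
  then have "ipr M \<psi> \<psi> \<le> \<delta>" using dpos by (simp add: ennreal_le_iff)
  then show ?thesis using sq by simp
qed

lemma (in finite_measure) L1_bound:
  assumes d: "sqi M d"
  shows "(\<integral>\<^sup>+x. ennreal \<bar>d x\<bar> \<partial>M) \<le> ennreal (sqrt (measure M (space M)) * sqrt (ipr M d d))"
proof -
  have a: "sqi M (\<lambda>x. \<bar>d x\<bar>)" using d by (rule sqi_abs)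
  have c: "sqi M (\<lambda>x. 1)" by (rule sqi_const) (rule finite_measure_axioms)
  have int: "integrable M (\<lambda>x. \<bar>d x\<bar>)" using sqi_prod_int[OF a c] by simp
  have "(\<integral>\<^sup>+x. ennreal \<bar>d x\<bar> \<partial>M) = ennreal (ipr M (\<lambda>x. \<bar>d x\<bar>) (\<lambda>x. 1))"
    unfolding ipr_def using int by (simp add: nn_integral_eq_integral)
  also have "ipr M (\<lambda>x. \<bar>d x\<bar>) (\<lambda>x. 1) \<le> sqrt (ipr M (\<lambda>x. \<bar>d x\<bar>) (\<lambda>x. \<bar>d x\<bar>)) * sqrt (ipr M (\<lambda>x. 1) (\<lambda>x. 1))"
    using ipr_CS_abs[OF a c] by simp
  also have "ipr M (\<lambda>x. \<bar>d x\<bar>) (\<lambda>x. \<bar>d x\<bar>) = ipr M d d"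
    unfolding ipr_def by (simp add: abs_mult[symmetric])
  also have "ipr M (\<lambda>x. 1) (\<lambda>x. 1) = measure M (space M)"
    unfolding ipr_def by simp
  finally show ?thesis by (simp add: mult.commute ennreal_leI)
qed

lemma ipr_swap: "ipr M (\<lambda>x. f x - g x) (\<lambda>x. f x - g x) = ipr M (\<lambda>x. g x - f x) (\<lambda>x. g x - f x)"
  unfolding ipr_def by (simp add: algebra_simps)

lemma (in finite_measure) L2_complete:
  fixes F :: "nat \<Rightarrow> 'a \<Rightarrow> real"
  assumes F: "\<And>n. sqi M (F n)"
    and C: "\<And>\<delta>. \<delta> > 0 \<Longrightarrow> \<exists>N. \<forall>p\<ge>N. \<forall>q\<ge>N. ipr M (\<lambda>x. F p x - F q x) (\<lambda>x. F p x - F q x) < \<delta>"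
  shows "\<exists>\<psi>. sqi M \<psi> \<and> (\<lambda>n. ipr M (\<lambda>x. \<psi> x - F n x) (\<lambda>x. \<psi> x - F n x)) \<longlonglongrightarrow> 0"
proof -
  have Fm[measurable]: "F n \<in> borel_measurable M" for n using F by (simp add: sqi_def)
  have "\<forall>m. \<exists>N. \<forall>p\<ge>N. \<forall>q\<ge>N. ipr M (\<lambda>x. F p x - F q x) (\<lambda>x. F p x - F q x) < (1/4)^m"
    using C by simp
  then obtain Nf where Nf: "\<And>m p q. p \<ge> Nf m \<Longrightarrow> q \<ge> Nf m \<Longrightarrow>
      ipr M (\<lambda>x. F p x - F q x) (\<lambda>x. F p x - F q x) < (1/4)^m"
    by metis
  define n where "n m = m + (\<Sum>i\<le>m. Nf i)" for m
  have n_ge: "Nf m \<le> n m" for m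
    unfolding n_def using member_le_sum[of m "{..m}" Nf] by simp
  have n_mono: "n m \<le> n (Suc m)" for m unfolding n_def by simp
  have n_ge_m: "m \<le> n m" for m unfolding n_def by simp
  define d where "d m x = F (n (Suc m)) x - F (n m) x" for m x
  have d_sq: "sqi M (d m)" for m unfolding d_def[abs_def] by (intro sqi_diff F)
  have d_small: "ipr M (d m) (d m) < (1/4)^m" for m
    unfolding d_def[abs_def] using n_ge[of m] n_mono[of m] by (intro Nf) auto
  define K where "K = sqrt (measure M (space M))"
  have K: "0 \<le> K" unfolding K_def by simp
  have d_L1: "(\<integral>\<^sup>+x. ennreal \<bar>d m x\<bar> \<partial>M) \<le> ennreal (K * (1/2)^m)" for m
  proof -
    have "sqrt (ipr M (d m) (d m)) \<le> sqrt ((1/4)^m)"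
      using d_small[of m] by (simp add: real_sqrt_le_mono less_imp_le)
    also have "sqrt ((1/4)^m) = (1/2::real)^m"
    proof -
      have "(1/4::real)^m = ((1/2)^m)^2"
        by (simp add: power_mult_distrib[symmetric] power2_eq_square)
      then show ?thesis by simp
    qed
    finally have "K * sqrt (ipr M (d m) (d m)) \<le> K * (1/2)^m" using K by (simp add: mult_left_mono)
    then show ?thesis using L1_bound[OF d_sq[of m]] unfolding K_def
      by (meson ennreal_leI order_trans)
  qed
  have sumfin: "(\<integral>\<^sup>+x. (\<Sum>m. ennreal \<bar>d m x\<bar>) \<partial>M) \<noteq> \<infinity>"
  proof -
    have "(\<integral>\<^sup>+x. (\<Sum>m. ennreal \<bar>d m x\<bar>) \<partial>M) = (\<Sum>m. \<integral>\<^sup>+x. ennreal \<bar>d m x\<bar> \<partial>M)"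
      by (rule nn_integral_suminf) (simp add: d_def)
    also have "\<dots> \<le> (\<Sum>m. ennreal (K * (1/2)^m))"
      by (intro suminf_le d_L1 summableI)
    also have "\<dots> = ennreal (\<Sum>m. K * (1/2)^m)"
      using K by (intro suminf_ennreal2) (auto intro!: summable_mult summable_geometric)
    finally show ?thesis by (auto simp: top_unique)
  qed
  have "AE x in M. (\<Sum>m. ennreal \<bar>d m x\<bar>) \<noteq> \<infinity>"
    by (rule nn_integral_noteq_infinite[OF _ sumfin]) (simp add: d_def)
  then have conv: "AE x in M. convergent (\<lambda>m. F (n m) x)"
  proof eventually_elim
    case (elim x)
    have "summable (\<lambda>m. \<bar>d m x\<bar>)"
      using elim by (intro summable_suminf_not_top) (auto simp: top_unique)
    then have s: "summable (\<lambda>m. d m x)" by (rule summable_rabs_cancel)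
    have eq: "F (n m) x = F (n 0) x + (\<Sum>i<m. d i x)" for m
      unfolding d_def using sum_lessThan_telescope[of "\<lambda>i. F (n i) x" m] by simp
    have "(\<lambda>m. F (n 0) x + (\<Sum>i<m. d i x)) \<longlonglongrightarrow> F (n 0) x + (\<Sum>i. d i x)"
      by (intro tendsto_add tendsto_const summable_LIMSEQ s)
    then show ?case unfolding eq[symmetric] by (rule convergentI)
  qed
  define \<psi> where "\<psi> x = lim (\<lambda>m. F (n m) x)" for x
  have psim[measurable]: "\<psi> \<in> borel_measurable M" unfolding \<psi>_def[abs_def] by measurable
  have psilim: "AE x in M. (\<lambda>m. F (n m) x) \<longlonglongrightarrow> \<psi> x"
    using conv by eventually_elim (simp add: \<psi>_def convergent_LIMSEQ_iff)
  have key: "sqi M (\<lambda>x. \<psi> x - F p x) \<and> ipr M (\<lambda>x. \<psi> x - F p x) (\<lambda>x. \<psi> x - F p x) \<le> \<delta>"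
    if N: "\<forall>p\<ge>N. \<forall>q\<ge>N. ipr M (\<lambda>x. F p x - F q x) (\<lambda>x. F p x - F q x) < \<delta>" and p: "p \<ge> N"
    for N p \<delta>
  proof (rule L2_fatou[where G="\<lambda>m x. F (n m) x - F p x" and Nz=N])
    show "sqi M (\<lambda>x. F (n m) x - F p x)" for m by (intro sqi_diff F)
    show "(\<lambda>x. \<psi> x - F p x) \<in> borel_measurable M" by measurable
    show "AE x in M. (\<lambda>m. F (n m) x - F p x) \<longlonglongrightarrow> \<psi> x - F p x"
      using psilim by eventually_elim (intro tendsto_diff tendsto_const)
    show "ipr M (\<lambda>x. F (n m) x - F p x) (\<lambda>x. F (n m) x - F p x) \<le> \<delta>" if "N \<le> m" for m
      using N p that n_ge_m[of m] by (meson less_imp_le order_trans)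
  qed
  obtain N1 where N1: "\<forall>p\<ge>N1. \<forall>q\<ge>N1. ipr M (\<lambda>x. F p x - F q x) (\<lambda>x. F p x - F q x) < 1"
    using C[of 1] by auto
  have "sqi M (\<lambda>x. \<psi> x - F N1 x)" using key[OF N1, of N1] by simp
  then have "sqi M (\<lambda>x. (\<psi> x - F N1 x) + F N1 x)" by (intro sqi_add F)
  then have sqpsi: "sqi M \<psi>" by simp
  have "(\<lambda>n. ipr M (\<lambda>x. \<psi> x - F n x) (\<lambda>x. \<psi> x - F n x)) \<longlonglongrightarrow> 0"
  proof (rule LIMSEQ_I)
    fix r :: real assume r: "0 < r"
    obtain N where N: "\<forall>p\<ge>N. \<forall>q\<ge>N. ipr M (\<lambda>x. F p x - F q x) (\<lambda>x. F p x - F q x) < r/2"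
      using C[of "r/2"] r by auto
    show "\<exists>no. \<forall>n\<ge>no. norm (ipr M (\<lambda>x. \<psi> x - F n x) (\<lambda>x. \<psi> x - F n x) - 0) < r"
    proof (intro exI allI impI)
      fix p assume "N \<le> p"
      then have "ipr M (\<lambda>x. \<psi> x - F p x) (\<lambda>x. \<psi> x - F p x) \<le> r/2" using key[OF N] by blast
      then show "norm (ipr M (\<lambda>x. \<psi> x - F p x) (\<lambda>x. \<psi> x - F p x) - 0) < r"
        using r ipr_self_nonneg[of M "\<lambda>x. \<psi> x - F p x"] by simp
    qed
  qed
  then show ?thesis using sqpsi by blast
qed

context gs_setup
begin

lemma weak_closed:
  fixes \<phi> :: "nat \<Rightarrow> 'a \<Rightarrow> real"
  assumes phi: "\<And>n. sqi M (\<phi> n)" and bnd: "\<And>n. ipr M (\<phi> n) (\<phi> n) \<le> C"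
    and lim: "\<And>k. (\<lambda>n. ipr M (h k) (\<phi> n)) \<longlonglongrightarrow> b k"
  shows "\<exists>\<psi>. sqi M \<psi> \<and> (\<forall>k. ipr M (h k) \<psi> = b k)"
proof -
  define \<alpha> where "\<alpha> n j = ipr M (E j) (\<phi> n)" for n j
  have \<alpha>_zero: "\<not> nz j \<Longrightarrow> \<alpha> n j = 0" for n j by (simp add: \<alpha>_def E_zero)
  have expand: "ipr M (h k) (\<phi> n) = (\<Sum>i<k. ipr M (h k) (E i) * \<alpha> n i) + ipr M (h k) (E k) * \<alpha> n k" for k n
    unfolding \<alpha>_def using h_expand[OF phi, of k n] by simp
  have conv: "convergent (\<lambda>n. \<alpha> n j)" for j
  proof (induction j rule: less_induct)
    case (less j)
    show ?case
    proof (cases "nz j")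
      case True
      define c where "c = ipr M (h j) (E j)"
      have c: "c > 0" unfolding c_def using hE_pos[OF True] .
      have eq: "\<alpha> n j = (ipr M (h j) (\<phi> n) - (\<Sum>i<j. ipr M (h j) (E i) * \<alpha> n i)) / c" for n
        using expand[of j n] c unfolding c_def by (simp add: field_simps)
      have "(\<lambda>n. (ipr M (h j) (\<phi> n) - (\<Sum>i<j. ipr M (h j) (E i) * \<alpha> n i)) / c) \<longlonglongrightarrow>
            (b j - (\<Sum>i<j. ipr M (h j) (E i) * lim (\<lambda>n. \<alpha> n i))) / c"
        using less c by (intro tendsto_intros lim) (auto simp: convergent_LIMSEQ_iff)
      then show ?thesis unfolding eq by (rule convergentI)
    next
      case False
      then show ?thesis by (simp add: \<alpha>_zero convergent_const)
    qed
  qed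
  define \<beta> where "\<beta> j = lim (\<lambda>n. \<alpha> n j)" for j
  have \<alpha>\<beta>: "(\<lambda>n. \<alpha> n j) \<longlonglongrightarrow> \<beta> j" for j
    using conv[of j] by (simp add: \<beta>_def convergent_LIMSEQ_iff)
  have \<beta>_zero: "\<not> nz j \<Longrightarrow> \<beta> j = 0" for j
    using \<alpha>\<beta>[of j] by (simp add: \<alpha>_zero LIMSEQ_const_iff)
  have b_eq: "b k = (\<Sum>i<Suc k. ipr M (h k) (E i) * \<beta> i)" for k
  proof -
    have "(\<lambda>n. ipr M (h k) (\<phi> n)) \<longlonglongrightarrow> (\<Sum>i<Suc k. ipr M (h k) (E i) * \<beta> i)"
      unfolding h_expand[OF phi] \<alpha>_def[symmetric]
      by (intro tendsto_intros \<alpha>\<beta>)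
    then show ?thesis using lim[of k] LIMSEQ_unique by blast
  qed
  have bessel: "(\<Sum>j<J. (\<alpha> n j)^2) \<le> C" for n J
  proof -
    define P where "P x = (\<Sum>j<J. \<alpha> n j * E j x)" for x
    have Psq: "sqi M P" unfolding P_def[abs_def] by (rule comb_sq)
    have z: "\<And>l. l \<in> {..<J} \<Longrightarrow> \<not> nz l \<Longrightarrow> \<alpha> n l = 0" using \<alpha>_zero by blast
    have PP: "ipr M P P = (\<Sum>j<J. (\<alpha> n j)^2)"
      unfolding P_def[abs_def] using comb_norm[of "{..<J}" "\<alpha> n"] z by simp
    have Pphi: "ipr M P (\<phi> n) = (\<Sum>j<J. (\<alpha> n j)^2)"
    proof -
      have "ipr M P (\<phi> n) = (\<Sum>j<J. ipr M (\<lambda>x. \<alpha> n j * E j x) (\<phi> n))"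
        unfolding P_def[abs_def] by (rule ipr_sum_left) (auto intro!: sqi_scale E_sq phi)
      also have "\<dots> = (\<Sum>j<J. (\<alpha> n j)^2)"
        by (simp add: ipr_scale_left \<alpha>_def power2_eq_square)
      finally show ?thesis .
    qed
    have "0 \<le> ipr M (\<lambda>x. \<phi> n x - P x) (\<lambda>x. \<phi> n x - P x)" by (rule ipr_self_nonneg)
    also have "\<dots> = ipr M (\<phi> n) (\<phi> n) - ipr M (\<phi> n) P - (ipr M P (\<phi> n) - ipr M P P)"
      using phi[of n] Psq sqi_diff[OF phi[of n] Psq]
      by (simp add: ipr_diff_left ipr_diff_right)
    also have "\<dots> = ipr M (\<phi> n) (\<phi> n) - (\<Sum>j<J. (\<alpha> n j)^2)"
      using PP Pphi ipr_sym[of M "\<phi> n" P] by simp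
    finally show ?thesis using bnd[of n] by simp
  qed
  have \<beta>_bound: "(\<Sum>j<J. (\<beta> j)^2) \<le> C" for J
  proof (rule tendsto_le[OF sequentially_bot])
    show "(\<lambda>n. \<Sum>j<J. (\<alpha> n j)^2) \<longlonglongrightarrow> (\<Sum>j<J. (\<beta> j)^2)" by (intro tendsto_intros \<alpha>\<beta>)
    show "(\<lambda>n. C) \<longlonglongrightarrow> C" by simp
    show "\<forall>\<^sub>F n in sequentially. (\<Sum>j<J. (\<alpha> n j)^2) \<le> C" using bessel by simp
  qed
  have summ: "summable (\<lambda>j. (\<beta> j)^2)"
    by (rule summableI_nonneg_bounded[OF _ \<beta>_bound]) simp
  define \<Psi> where "\<Psi> J x = (\<Sum>j<J. \<beta> j * E j x)" for J x
  have \<Psi>sq: "sqi M (\<Psi> J)" for J unfolding \<Psi>_def[abs_def] by (rule comb_sq)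
  have \<Psi>h: "ipr M (h k) (\<Psi> J) = b k" if "k < J" for k J
  proof -
    have "ipr M (h k) (\<Psi> J) = (\<Sum>j<J. ipr M (h k) (\<lambda>x. \<beta> j * E j x))"
      unfolding \<Psi>_def[abs_def] by (rule ipr_sum_right) (auto intro!: sqi_scale E_sq h_sq)
    also have "\<dots> = (\<Sum>j<J. ipr M (h k) (E j) * \<beta> j)"
      by (simp add: ipr_scale_right mult.commute)
    also have "\<dots> = (\<Sum>j<Suc k. ipr M (h k) (E j) * \<beta> j)"
      using that by (intro sum.mono_neutral_right) (auto simp: hE_above)
    finally show ?thesis using b_eq[of k] by simp
  qed
  have \<Psi>diff: "ipr M (\<lambda>x. \<Psi> p x - \<Psi> q x) (\<lambda>x. \<Psi> p x - \<Psi> q x) = (\<Sum>j\<in>{q..<p}. (\<beta> j)^2)"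
    if "q \<le> p" for p q
  proof -
    have eqf: "(\<lambda>x. \<Psi> p x - \<Psi> q x) = (\<lambda>x. \<Sum>j\<in>{q..<p}. \<beta> j * E j x)"
    proof
      fix x
      have "\<Psi> p x = \<Psi> q x + (\<Sum>j\<in>{q..<p}. \<beta> j * E j x)"
        unfolding \<Psi>_def by (rule sum_split_lt[OF that])
      then show "\<Psi> p x - \<Psi> q x = (\<Sum>j\<in>{q..<p}. \<beta> j * E j x)" by simp
    qed
    show ?thesis unfolding eqf using \<beta>_zero by (intro comb_norm) auto
  qed
  have tail: "(\<Sum>j\<in>{q..<p}. (\<beta> j)^2) \<le> (\<Sum>j. (\<beta> j)^2) - (\<Sum>j<q. (\<beta> j)^2)" if "q \<le> p" for p q
  proof -
    have "(\<Sum>j<p. (\<beta> j)^2) = (\<Sum>j<q. (\<beta> j)^2) + (\<Sum>j\<in>{q..<p}. (\<beta> j)^2)"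
      by (rule sum_split_lt[OF that])
    moreover have "(\<Sum>j<p. (\<beta> j)^2) \<le> (\<Sum>j. (\<beta> j)^2)"
      using summ by (intro sum_le_suminf) auto
    ultimately show ?thesis by simp
  qed
  have Cauchy: "\<exists>N. \<forall>p\<ge>N. \<forall>q\<ge>N. ipr M (\<lambda>x. \<Psi> p x - \<Psi> q x) (\<lambda>x. \<Psi> p x - \<Psi> q x) < \<delta>"
    if d: "\<delta> > 0" for \<delta>
  proof -
    have "(\<lambda>q. \<Sum>j<q. (\<beta> j)^2) \<longlonglongrightarrow> (\<Sum>j. (\<beta> j)^2)" using summ by (rule summable_LIMSEQ)
    then obtain N where N: "\<And>q. q \<ge> N \<Longrightarrow> \<bar>(\<Sum>j<q. (\<beta> j)^2) - (\<Sum>j. (\<beta> j)^2)\<bar> < \<delta>"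
      using d unfolding LIMSEQ_def dist_real_def by blast
    have "ipr M (\<lambda>x. \<Psi> p x - \<Psi> q x) (\<lambda>x. \<Psi> p x - \<Psi> q x) < \<delta>" if "q \<le> p" "N \<le> q" for p q
      using \<Psi>diff[OF that(1)] tail[OF that(1)] N[OF that(2)] by simp
    then show ?thesis
      by (metis ipr_swap nle_le)
  qed
  obtain \<psi> where psi: "sqi M \<psi>" and psilim: "(\<lambda>n. ipr M (\<lambda>x. \<psi> x - \<Psi> n x) (\<lambda>x. \<psi> x - \<Psi> n x)) \<longlonglongrightarrow> 0"
    using L2_complete[OF \<Psi>sq Cauchy] by blast
  have "ipr M (h k) \<psi> = b k" for k
  proof -
    have dsq: "sqi M (\<lambda>x. \<psi> x - \<Psi> n x)" for n by (intro sqi_diff psi \<Psi>sq)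
    have z: "(\<lambda>n. ipr M (h k) (\<lambda>x. \<psi> x - \<Psi> n x)) \<longlonglongrightarrow> 0"
    proof (rule Lim_null_comparison)
      show "\<forall>\<^sub>F n in sequentially. norm (ipr M (h k) (\<lambda>x. \<psi> x - \<Psi> n x)) \<le>
          sqrt (ipr M (h k) (h k)) * sqrt (ipr M (\<lambda>x. \<psi> x - \<Psi> n x) (\<lambda>x. \<psi> x - \<Psi> n x))"
        using ipr_CS_abs[OF h_sq dsq] by simp
      show "(\<lambda>n. sqrt (ipr M (h k) (h k)) * sqrt (ipr M (\<lambda>x. \<psi> x - \<Psi> n x) (\<lambda>x. \<psi> x - \<Psi> n x))) \<longlonglongrightarrow> 0"
        using tendsto_mult_right_zero[OF tendsto_real_sqrt[OF psilim, unfolded real_sqrt_zero]] by simp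
    qed
    have ev: "\<forall>\<^sub>F n in sequentially. ipr M (h k) (\<lambda>x. \<psi> x - \<Psi> n x) = ipr M (h k) \<psi> - b k"
      unfolding eventually_sequentially
    proof (intro exI allI impI)
      fix n assume "Suc k \<le> n"
      then show "ipr M (h k) (\<lambda>x. \<psi> x - \<Psi> n x) = ipr M (h k) \<psi> - b k"
        using \<Psi>h[of k n] by (simp add: ipr_diff_right psi \<Psi>sq h_sq)
    qed
    have "(\<lambda>n. ipr M (h k) \<psi> - b k) \<longlonglongrightarrow> 0"
      using z ev by (rule Lim_transform_eventually)
    then show ?thesis by (simp add: LIMSEQ_const_iff)
  qed
  then show ?thesis using psi by blast
qed

end

lemma ennreal_abs_integral_le:
  fixes F :: "'a \<Rightarrow> real"
  shows "ennreal \<bar>\<integral>x. F x \<partial>M\<bar> \<le> (\<integral>\<^sup>+x. ennreal \<bar>F x\<bar> \<partial>M)"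
proof (cases "integrable M F")
  case True
  then show ?thesis using integral_norm_bound_ennreal[OF True] by simp
next
  case False
  then show ?thesis by (simp add: not_integrable_integral_eq)
qed
lemma ennreal_sq_le_sqrt:
  fixes a :: ennreal
  assumes "a^2 \<le> ennreal r" "0 \<le> r"
  shows "a \<le> ennreal (sqrt r)"
proof -
  have "a \<noteq> \<infinity>"
  proof
    assume "a = \<infinity>"
    then have "a^2 = \<infinity>" by (simp add: power2_eq_square)
    then show False using assms(1) by (simp add: top_unique)
  qed
  then obtain t where t: "a = ennreal t" "0 \<le> t" by (cases a) auto
  have "ennreal (t^2) \<le> ennreal r" using assms(1) t by (simp add: ennreal_power)
  then have "t^2 \<le> r" using assms(2) by (simp add: ennreal_le_iff)
  then have "t \<le> sqrt r" using t(2) real_le_rsqrt by blast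
  then show ?thesis using t by (simp add: ennreal_leI)
qed

lemma abs_sin_diff_le:
  fixes a b :: real
  shows "\<bar>sin a - sin b\<bar> \<le> \<bar>a - b\<bar>"
proof -
  have "sin a - sin b = 2 * sin ((a - b) / 2) * cos ((a + b) / 2)"
    by (rule sin_diff_sin)
  then have "\<bar>sin a - sin b\<bar> = 2 * \<bar>sin ((a - b) / 2)\<bar> * \<bar>cos ((a + b) / 2)\<bar>"
    by (simp only: abs_mult abs_numeral)
  also have "\<dots> \<le> 2 * \<bar>(a - b) / 2\<bar> * 1"
    by (intro mult_mono abs_sin_x_le_abs_x abs_cos_le_one) auto
  finally show ?thesis by simp
qed

lemma sin_basis_bound: "\<bar>sin_basis k x\<bar> \<le> sqrt 2"
  unfolding sin_basis_def abs_mult by (simp add: mult_left_le)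

lemma sin_basis_lip: "\<bar>sin_basis k a - sin_basis k b\<bar> \<le> sqrt 2 * real k * pi * \<bar>a - b\<bar>"
proof -
  have e1: "sin_basis k a - sin_basis k b = sqrt 2 * (sin (real k * pi * a) - sin (real k * pi * b))"
    unfolding sin_basis_def by (simp only: right_diff_distrib)
  have e2: "real k * pi * a - real k * pi * b = (real k * pi) * (a - b)"
    by (simp only: right_diff_distrib)
  have "\<bar>sin (real k * pi * a) - sin (real k * pi * b)\<bar> \<le> (real k * pi) * \<bar>a - b\<bar>"
    using abs_sin_diff_le[of "real k * pi * a" "real k * pi * b"] unfolding e2 abs_mult
    by simp
  then have "sqrt 2 * \<bar>sin (real k * pi * a) - sin (real k * pi * b)\<bar> \<le> sqrt 2 * ((real k * pi) * \<bar>a - b\<bar>)"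
    by (intro mult_left_mono) auto
  then show ?thesis unfolding e1 abs_mult by (simp add: mult.assoc)
qed


definition MT :: "real \<Rightarrow> real measure" where
  "MT T = restrict_space lborel {0<..<T}"

definition hk :: "real \<Rightarrow> real \<Rightarrow> nat \<Rightarrow> real \<Rightarrow> real" where
  "hk T x0 k s = sin_basis k x0 * exp (- eigval k * (T - s))"

definition phi :: "(real \<Rightarrow> real \<Rightarrow> real) \<Rightarrow> real \<Rightarrow> real" where
  "phi f s = (\<integral>x. f s x \<partial>lborel)"

lemma space_MT[simp]: "space (MT T) = {0<..<T}"
  unfolding MT_def by (simp add: space_restrict_space)

lemma emeasure_MT: "0 < T \<Longrightarrow> emeasure (MT T) (space (MT T)) = ennreal T"
proof -
  assume T: "0 < T"
  have "emeasure (MT T) {0<..<T} = emeasure lborel {0<..<T}"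
    unfolding MT_def by (rule emeasure_restrict_space) auto
  then show ?thesis using T by simp
qed

lemma MT_finite: "0 < T \<Longrightarrow> finite_measure (MT T)"
proof -
  assume T: "0 < T"
  show ?thesis by (rule finite_measureI) (use emeasure_MT[OF T] in simp)
qed

lemma meas_MT: "g \<in> borel_measurable lborel \<Longrightarrow> g \<in> borel_measurable (MT T)"
  unfolding MT_def by (rule measurable_restrict_space1)

lemma eigval_nonneg: "0 \<le> eigval k" unfolding eigval_def by simp

lemma exp_le_one_MT: "s \<in> {0<..<T} \<Longrightarrow> exp (- eigval k * (T - s)) \<le> 1"
proof -
  assume s: "s \<in> {0<..<T}"
  have "0 \<le> eigval k * (T - s)" using s eigval_nonneg[of k] by (intro mult_nonneg_nonneg) auto
  then have "- eigval k * (T - s) \<le> 0" by simp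
  then show ?thesis by simp
qed

lemma hk_meas: "hk T x0 k \<in> borel_measurable lborel"
  unfolding hk_def by measurable

lemma hk_sqi: "0 < T \<Longrightarrow> sqi (MT T) (hk T x0 k)"
proof -
  assume T: "0 < T"
  have m: "hk T x0 k \<in> borel_measurable (MT T)"
    by (intro meas_MT hk_meas)
  have m2: "(\<lambda>s. (hk T x0 k s)^2) \<in> borel_measurable (MT T)"
    by (intro meas_MT) (unfold hk_def, measurable)
  have b: "AE s in MT T. norm ((hk T x0 k s)^2) \<le> 2"
  proof (rule AE_I2)
    fix s assume s: "s \<in> space (MT T)"
    have e1: "exp (- eigval k * (T - s)) \<le> 1" using s exp_le_one_MT[of s T k] by simp
    have "\<bar>hk T x0 k s\<bar> \<le> sqrt 2 * 1"
      unfolding hk_def abs_mult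
      by (rule mult_mono) (use e1 sin_basis_bound[of k x0] in auto)
    then have "\<bar>hk T x0 k s\<bar>^2 \<le> (sqrt 2)^2"
      by (intro power_mono) auto
    then show "norm ((hk T x0 k s)^2) \<le> 2" by simp
  qed
  have "integrable (MT T) (\<lambda>s. (hk T x0 k s)^2)"
    by (rule finite_measure.integrable_const_bound[OF MT_finite[OF T] b m2])
  then show ?thesis using m by (simp add: sqi_def)
qed

locale ctrl =
  fixes T x0 \<epsilon> :: real and f :: "real \<Rightarrow> real \<Rightarrow> real"
  assumes T: "0 < T" and eps: "0 < \<epsilon>" and sub: "{x0 - \<epsilon><..<x0 + \<epsilon>} \<subseteq> {0<..<1}"
    and meas[measurable]: "(\<lambda>(t,x). f t x) \<in> borel_measurable (lborel \<Otimes>\<^sub>M lborel)"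
    and sqint: "set_integrable (lborel \<Otimes>\<^sub>M lborel) ({0<..<T} \<times> {0<..<1}) (\<lambda>(t,x). (f t x)^2)"
    and supp: "\<And>t x. x \<notin> {x0 - \<epsilon><..<x0 + \<epsilon>} \<Longrightarrow> f t x = 0"
begin

definition NQ :: real where
  "NQ = (LINT z:({0<..<T} \<times> {0<..<1})|(lborel \<Otimes>\<^sub>M lborel). (case z of (t,x) \<Rightarrow> (f t x)^2))"

definition Q :: "real \<Rightarrow> ennreal" where
  "Q s = (\<integral>\<^sup>+x. ennreal ((f s x)^2) \<partial>lborel)"

definition Ab :: "real \<Rightarrow> ennreal" where
  "Ab s = (\<integral>\<^sup>+x. ennreal \<bar>f s x\<bar> \<partial>lborel)"

lemma L2norm_eq: "L2norm_QT T f = sqrt NQ"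
  unfolding L2norm_QT_def NQ_def ..

lemma f_zero_out: "x \<notin> {0<..<1} \<Longrightarrow> f t x = 0"
  using supp sub by blast

lemma sec_meas[measurable]: "f s \<in> borel_measurable lborel"
  using measurable_Pair2[OF meas, of s] by simp

lemma Q_meas[measurable]: "Q \<in> borel_measurable lborel"
  unfolding Q_def[abs_def] by measurable

lemma Ab_meas[measurable]: "Ab \<in> borel_measurable lborel"
  unfolding Ab_def[abs_def] by measurable

lemma phi_meas[measurable]: "phi f \<in> borel_measurable lborel"
  unfolding phi_def[abs_def] by measurable

lemma tonelli: "(\<integral>\<^sup>+s. Q s \<partial>MT T) = ennreal NQ"
proof -
  let ?A = "{0<..<T} \<times> {0<..<1} :: (real \<times> real) set"
  have int: "integrable (lborel \<Otimes>\<^sub>M lborel) (\<lambda>z. indicator ?A z *\<^sub>R (case z of (t,x) \<Rightarrow> (f t x)^2))"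
    using sqint unfolding set_integrable_def by simp
  have "ennreal NQ = (\<integral>\<^sup>+z. ennreal (indicator ?A z *\<^sub>R (case z of (t,x) \<Rightarrow> (f t x)^2)) \<partial>(lborel \<Otimes>\<^sub>M lborel))"
    unfolding NQ_def set_lebesgue_integral_def
    by (rule nn_integral_eq_integral[symmetric, OF int]) (auto split: split_indicator)
  also have "\<dots> = (\<integral>\<^sup>+s. \<integral>\<^sup>+x. ennreal (indicator ?A (s,x) *\<^sub>R (f s x)^2) \<partial>lborel \<partial>lborel)"
  proof -
    define F where "F = (\<lambda>z::real\<times>real. ennreal (indicator ?A z *\<^sub>R (case z of (t,x) \<Rightarrow> (f t x)^2)))"
    have Fm: "F \<in> borel_measurable (lborel \<Otimes>\<^sub>M lborel)" unfolding F_def by measurable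
    have "(\<integral>\<^sup>+s. \<integral>\<^sup>+x. F (s,x) \<partial>lborel \<partial>lborel) = integral\<^sup>N (lborel \<Otimes>\<^sub>M lborel) F"
      by (rule lborel.nn_integral_fst[OF Fm])
    then show ?thesis unfolding F_def by simp
  qed
  also have "\<dots> = (\<integral>\<^sup>+s. Q s * indicator {0<..<T} s \<partial>lborel)"
  proof (rule nn_integral_cong)
    fix s :: real
    show "(\<integral>\<^sup>+x. ennreal (indicator ?A (s,x) *\<^sub>R (f s x)^2) \<partial>lborel) = Q s * indicator {0<..<T} s"
    proof (cases "s \<in> {0<..<T}")
      case True
      have "(\<integral>\<^sup>+x. ennreal (indicator ?A (s,x) *\<^sub>R (f s x)^2) \<partial>lborel) = Q s"
        unfolding Q_def using True f_zero_out[of _ s]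
        by (intro nn_integral_cong) (auto split: split_indicator)
      then show ?thesis using True by simp
    next
      case False
      then have z: "\<And>x. indicator ?A (s,x) *\<^sub>R (f s x)^2 = (0::real)" by (auto simp: indicator_def)
      show ?thesis using False by (simp only: z) simp
    qed
  qed
  also have "\<dots> = (\<integral>\<^sup>+s. Q s \<partial>MT T)"
    unfolding MT_def by (rule nn_integral_restrict_space[symmetric]) simp
  finally show ?thesis by simp
qed

lemma NQ_nonneg: "0 \<le> NQ"
  unfolding NQ_def set_lebesgue_integral_def
  by (rule integral_nonneg_AE) (auto split: split_indicator)

lemma Ab_CS: "(Ab s)^2 \<le> ennreal (2 * \<epsilon>) * Q s"
proof -
  let ?w = "{x0 - \<epsilon><..<x0 + \<epsilon>}"
  have "Ab s = (\<integral>\<^sup>+x. ennreal \<bar>f s x\<bar> * indicator ?w x \<partial>lborel)"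
    unfolding Ab_def by (intro nn_integral_cong) (auto split: split_indicator simp: supp)
  then have "(Ab s)^2 \<le> (\<integral>\<^sup>+x. (ennreal \<bar>f s x\<bar>)^2 \<partial>lborel) * (\<integral>\<^sup>+x. (indicator ?w x :: ennreal)^2 \<partial>lborel)"
    using Cauchy_Schwarz_nn_integral[of "\<lambda>x. ennreal \<bar>f s x\<bar>" lborel "indicator ?w"] by simp
  also have "(\<integral>\<^sup>+x. (ennreal \<bar>f s x\<bar>)^2 \<partial>lborel) = Q s"
    unfolding Q_def by (intro nn_integral_cong) (simp add: ennreal_power)
  also have "(\<integral>\<^sup>+x. (indicator ?w x :: ennreal)^2 \<partial>lborel) = ennreal (2 * \<epsilon>)"
  proof -
    have "(\<integral>\<^sup>+x. (indicator ?w x :: ennreal)^2 \<partial>lborel) = (\<integral>\<^sup>+x. indicator ?w x \<partial>lborel)"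
      by (intro nn_integral_cong) (simp split: split_indicator)
    also have "\<dots> = ennreal (2 * \<epsilon>)" using eps by simp
    finally show ?thesis .
  qed
  finally show ?thesis by (simp add: mult.commute)
qed

lemma phi_le: "ennreal \<bar>phi f s\<bar> \<le> Ab s"
  unfolding phi_def Ab_def by (rule ennreal_abs_integral_le)

lemma phi_sq_le: "ennreal ((phi f s)^2) \<le> ennreal (2 * \<epsilon>) * Q s"
proof -
  have "ennreal ((phi f s)^2) = (ennreal \<bar>phi f s\<bar>)^2" by (simp add: ennreal_power)
  also have "\<dots> \<le> (Ab s)^2" by (intro power_mono phi_le) simp
  also note Ab_CS
  finally show ?thesis .
qed

lemma int_Q: "(\<integral>\<^sup>+s. ennreal (2 * \<epsilon>) * Q s \<partial>MT T) = ennreal (2 * \<epsilon> * NQ)"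
proof -
  have "(\<integral>\<^sup>+s. ennreal (2 * \<epsilon>) * Q s \<partial>MT T) = ennreal (2 * \<epsilon>) * (\<integral>\<^sup>+s. Q s \<partial>MT T)"
    by (rule nn_integral_cmult) (rule meas_MT, rule Q_meas)
  also have "\<dots> = ennreal (2 * \<epsilon> * NQ)" using eps NQ_nonneg by (simp add: tonelli ennreal_mult)
  finally show ?thesis .
qed

lemma phi_sqi: "sqi (MT T) (phi f)" and phi_ipr: "ipr (MT T) (phi f) (phi f) \<le> 2 * \<epsilon> * NQ"
proof -
  have m: "phi f \<in> borel_measurable (MT T)" by (rule meas_MT) (rule phi_meas)
  have fin: "(\<integral>\<^sup>+s. ennreal ((phi f s)^2) \<partial>MT T) \<le> ennreal (2 * \<epsilon> * NQ)"
    unfolding int_Q[symmetric] by (intro nn_integral_mono phi_sq_le)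
  have "integrable (MT T) (\<lambda>s. (phi f s)^2)"
  proof (rule integrableI_bounded)
    show "(\<integral>\<^sup>+x. ennreal (norm ((phi f x)^2)) \<partial>MT T) < \<infinity>"
      using fin by (simp add: le_less_trans)
  qed (use m in simp)
  then show sq: "sqi (MT T) (phi f)" using m by (simp add: sqi_def)
  have "ennreal (ipr (MT T) (phi f) (phi f)) \<le> ennreal (2 * \<epsilon> * NQ)"
    using fin ipr_self_ennreal[OF sq] by simp
  then show "ipr (MT T) (phi f) (phi f) \<le> 2 * \<epsilon> * NQ"
    using eps NQ_nonneg by (simp add: ennreal_le_iff)
qed

lemma Ab_int: "(\<integral>\<^sup>+s. Ab s \<partial>MT T) \<le> ennreal (sqrt (2 * \<epsilon> * NQ * T))"
proof (rule ennreal_sq_le_sqrt)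
  show "0 \<le> 2 * \<epsilon> * NQ * T" using eps NQ_nonneg T by simp
  have "(\<integral>\<^sup>+s. Ab s * 1 \<partial>MT T)^2 \<le> (\<integral>\<^sup>+s. (Ab s)^2 \<partial>MT T) * (\<integral>\<^sup>+s. 1^2 \<partial>MT T)"
    by (rule Cauchy_Schwarz_nn_integral) (auto intro: meas_MT)
  also have "(\<integral>\<^sup>+s. (Ab s)^2 \<partial>MT T) \<le> ennreal (2 * \<epsilon> * NQ)"
    unfolding int_Q[symmetric] by (intro nn_integral_mono Ab_CS)
  also have "(\<integral>\<^sup>+s. (1::ennreal)^2 \<partial>MT T) = ennreal T"
    using emeasure_MT[OF T] by simp
  finally show "(\<integral>\<^sup>+s. Ab s \<partial>MT T)^2 \<le> ennreal (2 * \<epsilon> * NQ * T)"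
    using eps NQ_nonneg T by (simp add: ennreal_mult mult_right_mono)
qed

definition Pk :: "nat \<Rightarrow> real \<Rightarrow> real" where
  "Pk k s = (\<integral>x. f s x * sin_basis k x \<partial>lborel)"

lemma sb_meas[measurable]: "sin_basis k \<in> borel_measurable lborel"
  unfolding sin_basis_def[abs_def] by measurable

lemma Pk_meas[measurable]: "Pk k \<in> borel_measurable lborel"
  unfolding Pk_def[abs_def] by measurable

lemma fe_bound: "(\<integral>\<^sup>+x. ennreal \<bar>f s x * sin_basis k x\<bar> \<partial>lborel) \<le> ennreal (sqrt 2) * Ab s"
proof -
  have "(\<integral>\<^sup>+x. ennreal \<bar>f s x * sin_basis k x\<bar> \<partial>lborel) \<le> (\<integral>\<^sup>+x. ennreal (sqrt 2) * ennreal \<bar>f s x\<bar> \<partial>lborel)"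
  proof (rule nn_integral_mono)
    fix x
    have "\<bar>f s x\<bar> * \<bar>sin_basis k x\<bar> \<le> \<bar>f s x\<bar> * sqrt 2"
      by (rule mult_left_mono) (rule sin_basis_bound, simp)
    then have "\<bar>f s x * sin_basis k x\<bar> \<le> sqrt 2 * \<bar>f s x\<bar>"
      by (simp add: abs_mult mult.commute[of "sqrt 2"])
    then show "ennreal \<bar>f s x * sin_basis k x\<bar> \<le> ennreal (sqrt 2) * ennreal \<bar>f s x\<bar>"
      by (simp add: ennreal_mult[symmetric] ennreal_leI)
  qed
  also have "\<dots> = ennreal (sqrt 2) * Ab s"
    unfolding Ab_def by (rule nn_integral_cmult) measurable
  finally show ?thesis .
qed

lemma Pk_le: "ennreal \<bar>Pk k s\<bar> \<le> ennreal (sqrt 2) * Ab s"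
  unfolding Pk_def by (rule order_trans[OF ennreal_abs_integral_le fe_bound])

definition Lk :: "nat \<Rightarrow> real" where
  "Lk k = sqrt 2 * real k * pi + 1"

lemma Lk_pos: "0 < Lk k"
  unfolding Lk_def by (simp add: add_nonneg_pos)

lemma D_le: "ennreal \<bar>sin_basis k x0 * phi f s - Pk k s\<bar> \<le> ennreal (Lk k * \<epsilon>) * Ab s"
proof (cases "Ab s = \<infinity>")
  case True
  have "ennreal (Lk k * \<epsilon>) \<noteq> 0" using Lk_pos[of k] eps by simp
  then show ?thesis using True by (simp add: ennreal_mult_top)
next
  case False
  then have fin: "Ab s < \<infinity>" by (simp add: less_top)
  have int1: "integrable lborel (f s)"
    by (rule integrableI_bounded) (use fin in \<open>simp_all add: Ab_def\<close>)
  have int2: "integrable lborel (\<lambda>x. f s x * sin_basis k x)"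
  proof (rule integrableI_bounded)
    have "(\<integral>\<^sup>+x. ennreal (norm (f s x * sin_basis k x)) \<partial>lborel) \<le> ennreal (sqrt 2) * Ab s"
      using fe_bound by simp
    also have "\<dots> < \<infinity>" using fin by (simp add: ennreal_mult_less_top)
    finally show "(\<integral>\<^sup>+x. ennreal (norm (f s x * sin_basis k x)) \<partial>lborel) < \<infinity>" .
  qed simp
  have eq: "sin_basis k x0 * phi f s - Pk k s = (\<integral>x. f s x * (sin_basis k x0 - sin_basis k x) \<partial>lborel)"
  proof -
    have "sin_basis k x0 * phi f s - Pk k s = (\<integral>x. sin_basis k x0 * f s x \<partial>lborel) - (\<integral>x. f s x * sin_basis k x \<partial>lborel)"
      unfolding phi_def Pk_def by simp
    also have "\<dots> = (\<integral>x. sin_basis k x0 * f s x - f s x * sin_basis k x \<partial>lborel)"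
      using int1 int2 by (simp add: Bochner_Integration.integral_diff)
    also have "\<dots> = (\<integral>x. f s x * (sin_basis k x0 - sin_basis k x) \<partial>lborel)"
      by (simp add: algebra_simps)
    finally show ?thesis .
  qed
  have "ennreal \<bar>sin_basis k x0 * phi f s - Pk k s\<bar> \<le> (\<integral>\<^sup>+x. ennreal \<bar>f s x * (sin_basis k x0 - sin_basis k x)\<bar> \<partial>lborel)"
    unfolding eq by (rule ennreal_abs_integral_le)
  also have "\<dots> \<le> (\<integral>\<^sup>+x. ennreal (Lk k * \<epsilon>) * ennreal \<bar>f s x\<bar> \<partial>lborel)"
  proof (rule nn_integral_mono)
    fix x
    have "\<bar>f s x * (sin_basis k x0 - sin_basis k x)\<bar> \<le> (Lk k * \<epsilon>) * \<bar>f s x\<bar>"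
    proof (cases "x \<in> {x0 - \<epsilon><..<x0 + \<epsilon>}")
      case True
      have "\<bar>sin_basis k x0 - sin_basis k x\<bar> \<le> sqrt 2 * real k * pi * \<bar>x0 - x\<bar>"
        by (rule sin_basis_lip)
      also have "\<dots> \<le> sqrt 2 * real k * pi * \<epsilon>"
        using True by (intro mult_left_mono) auto
      also have "\<dots> \<le> Lk k * \<epsilon>"
        unfolding Lk_def using eps by (simp add: distrib_right)
      finally have "\<bar>sin_basis k x0 - sin_basis k x\<bar> \<le> Lk k * \<epsilon>" .
      then have "\<bar>f s x\<bar> * \<bar>sin_basis k x0 - sin_basis k x\<bar> \<le> \<bar>f s x\<bar> * (Lk k * \<epsilon>)"
        by (rule mult_left_mono) simp
      then show ?thesis by (simp add: abs_mult mult.commute[of "Lk k * \<epsilon>"])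
    next
      case False
      then show ?thesis using supp[OF False] Lk_pos[of k] eps by simp
    qed
    then have le: "ennreal \<bar>f s x * (sin_basis k x0 - sin_basis k x)\<bar> \<le> ennreal (Lk k * \<epsilon> * \<bar>f s x\<bar>)"
      by (rule ennreal_leI)
    have "ennreal (Lk k * \<epsilon> * \<bar>f s x\<bar>) = ennreal (Lk k * \<epsilon>) * ennreal \<bar>f s x\<bar>"
      using Lk_pos[of k] eps by (simp add: ennreal_mult)
    with le show "ennreal \<bar>f s x * (sin_basis k x0 - sin_basis k x)\<bar> \<le> ennreal (Lk k * \<epsilon>) * ennreal \<bar>f s x\<bar>"
      by simp
  qed
  also have "\<dots> = ennreal (Lk k * \<epsilon>) * Ab s"
    unfolding Ab_def by (rule nn_integral_cmult) measurable
  finally show ?thesis .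
qed

lemma int_MT_bound:
  assumes m: "g \<in> borel_measurable (MT T)"
    and b: "\<And>s. s \<in> {0<..<T} \<Longrightarrow> ennreal \<bar>g s\<bar> \<le> ennreal C * Ab s"
  shows "integrable (MT T) g"
proof (rule integrableI_bounded)
  have "(\<integral>\<^sup>+s. ennreal (norm (g s)) \<partial>MT T) \<le> (\<integral>\<^sup>+s. ennreal C * Ab s \<partial>MT T)"
    using b by (intro nn_integral_mono) simp
  also have "\<dots> = ennreal C * (\<integral>\<^sup>+s. Ab s \<partial>MT T)"
    by (rule nn_integral_cmult) (rule meas_MT, rule Ab_meas)
  also have "\<dots> \<le> ennreal C * ennreal (sqrt (2 * \<epsilon> * NQ * T))"
    by (intro mult_left_mono Ab_int) simp
  also have "\<dots> < \<infinity>" by (simp add: ennreal_mult_less_top)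
  finally show "(\<integral>\<^sup>+s. ennreal (norm (g s)) \<partial>MT T) < \<infinity>" .
qed (rule m)

lemma err:
  "\<bar>ipr (MT T) (hk T x0 k) (phi f) - (\<integral>s. exp (- eigval k * (T - s)) * Pk k s \<partial>MT T)\<bar>
     \<le> Lk k * \<epsilon> * sqrt (2 * \<epsilon> * NQ * T)"
proof -
  let ?g = "\<lambda>s. exp (- eigval k * (T - s))"
  have i1: "integrable (MT T) (\<lambda>s. hk T x0 k s * phi f s)"
  proof (rule int_MT_bound[where C="sqrt 2"])
    show "(\<lambda>s. hk T x0 k s * phi f s) \<in> borel_measurable (MT T)"
      by (rule meas_MT) (unfold hk_def, measurable)
    fix s :: real assume s: "s \<in> {0<..<T}"
    have "\<bar>hk T x0 k s * phi f s\<bar> \<le> sqrt 2 * \<bar>phi f s\<bar>"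
    proof -
      have e1: "exp (- eigval k * (T - s)) \<le> 1" using s exp_le_one_MT[of s T k] by simp
      have "\<bar>hk T x0 k s\<bar> \<le> sqrt 2 * 1"
        unfolding hk_def abs_mult
        by (rule mult_mono) (use e1 sin_basis_bound[of k x0] in auto)
      then show ?thesis unfolding abs_mult by (simp add: mult_right_mono)
    qed
    then have "ennreal \<bar>hk T x0 k s * phi f s\<bar> \<le> ennreal (sqrt 2) * ennreal \<bar>phi f s\<bar>"
      by (simp add: ennreal_mult[symmetric] ennreal_leI)
    also have "\<dots> \<le> ennreal (sqrt 2) * Ab s" by (intro mult_left_mono phi_le) simp
    finally show "ennreal \<bar>hk T x0 k s * phi f s\<bar> \<le> ennreal (sqrt 2) * Ab s" .
  qed
  have i2: "integrable (MT T) (\<lambda>s. ?g s * Pk k s)"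
  proof (rule int_MT_bound[where C="sqrt 2"])
    show "(\<lambda>s. ?g s * Pk k s) \<in> borel_measurable (MT T)"
      by (rule meas_MT) measurable
    fix s :: real assume s: "s \<in> {0<..<T}"
    have e1: "exp (- eigval k * (T - s)) \<le> 1" using s exp_le_one_MT[of s T k] by simp
    have "\<bar>?g s * Pk k s\<bar> \<le> \<bar>Pk k s\<bar>"
      unfolding abs_mult using e1 by (simp add: mult_left_le_one_le)
    then have "ennreal \<bar>?g s * Pk k s\<bar> \<le> ennreal \<bar>Pk k s\<bar>" by (rule ennreal_leI)
    also have "\<dots> \<le> ennreal (sqrt 2) * Ab s" by (rule Pk_le)
    finally show "ennreal \<bar>?g s * Pk k s\<bar> \<le> ennreal (sqrt 2) * Ab s" .
  qed
  have "ipr (MT T) (hk T x0 k) (phi f) - (\<integral>s. ?g s * Pk k s \<partial>MT T)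
      = (\<integral>s. hk T x0 k s * phi f s - ?g s * Pk k s \<partial>MT T)"
    unfolding ipr_def using i1 i2 by (simp add: Bochner_Integration.integral_diff)
  also have "\<dots> = (\<integral>s. ?g s * (sin_basis k x0 * phi f s - Pk k s) \<partial>MT T)"
    unfolding hk_def by (simp add: algebra_simps)
  finally have eq: "ipr (MT T) (hk T x0 k) (phi f) - (\<integral>s. ?g s * Pk k s \<partial>MT T)
      = (\<integral>s. ?g s * (sin_basis k x0 * phi f s - Pk k s) \<partial>MT T)" .
  have "ennreal \<bar>ipr (MT T) (hk T x0 k) (phi f) - (\<integral>s. ?g s * Pk k s \<partial>MT T)\<bar>
      \<le> (\<integral>\<^sup>+s. ennreal \<bar>?g s * (sin_basis k x0 * phi f s - Pk k s)\<bar> \<partial>MT T)"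
    unfolding eq by (rule ennreal_abs_integral_le)
  also have "\<dots> \<le> (\<integral>\<^sup>+s. ennreal (Lk k * \<epsilon>) * Ab s \<partial>MT T)"
  proof (rule nn_integral_mono)
    fix s assume s: "s \<in> space (MT T)"
    have e1: "exp (- eigval k * (T - s)) \<le> 1" using s exp_le_one_MT[of s T k] by simp
    have "\<bar>?g s * (sin_basis k x0 * phi f s - Pk k s)\<bar> \<le> \<bar>sin_basis k x0 * phi f s - Pk k s\<bar>"
      unfolding abs_mult using e1 by (simp add: mult_left_le_one_le)
    then have "ennreal \<bar>?g s * (sin_basis k x0 * phi f s - Pk k s)\<bar> \<le> ennreal \<bar>sin_basis k x0 * phi f s - Pk k s\<bar>"
      by (rule ennreal_leI)
    also note D_le
    finally show "ennreal \<bar>?g s * (sin_basis k x0 * phi f s - Pk k s)\<bar> \<le> ennreal (Lk k * \<epsilon>) * Ab s" .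
  qed
  also have "\<dots> = ennreal (Lk k * \<epsilon>) * (\<integral>\<^sup>+s. Ab s \<partial>MT T)"
    by (rule nn_integral_cmult) (rule meas_MT, rule Ab_meas)
  also have "\<dots> \<le> ennreal (Lk k * \<epsilon>) * ennreal (sqrt (2 * \<epsilon> * NQ * T))"
    by (intro mult_left_mono Ab_int) simp
  also have "\<dots> = ennreal (Lk k * \<epsilon> * sqrt (2 * \<epsilon> * NQ * T))"
    by (rule ennreal_mult[symmetric]) (use Lk_pos[of k] eps T NQ_nonneg in auto)
  finally have fin: "ennreal \<bar>ipr (MT T) (hk T x0 k) (phi f) - (\<integral>s. ?g s * Pk k s \<partial>MT T)\<bar>
      \<le> ennreal (Lk k * \<epsilon> * sqrt (2 * \<epsilon> * NQ * T))" .
  have nn: "0 \<le> Lk k * \<epsilon> * sqrt (2 * \<epsilon> * NQ * T)"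
    using Lk_pos[of k] eps T NQ_nonneg by simp
  show ?thesis using fin nn by (subst (asm) ennreal_le_iff) auto
qed

lemma moment_eq:
  "(LINT s:{0<..<T}|lborel. exp (- eigval k * (T - s)) * (LINT x:{0<..<1}|lborel. f s x * sin_basis k x))
    = (\<integral>s. exp (- eigval k * (T - s)) * Pk k s \<partial>MT T)"
proof -
  have inner: "(\<integral>x. indicator {0<..<1} x *\<^sub>R (f s x * sin_basis k x) \<partial>lborel) = Pk k s" for s
    unfolding Pk_def
    by (intro Bochner_Integration.integral_cong refl) (auto split: split_indicator simp: f_zero_out)
  show ?thesis
    unfolding MT_def set_lebesgue_integral_def inner
    by (subst integral_restrict_space) auto
qed

lemma ctrl_err:
  assumes "final_coeff T u0 f k = 0"
  shows "\<bar>ipr (MT T) (hk T x0 k) (phi f) - (- exp (- eigval k * T) * coeff u0 k)\<bar>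
     \<le> Lk k * \<epsilon> * sqrt (2 * \<epsilon> * NQ * T)"
proof -
  have "- exp (- eigval k * T) * coeff u0 k = (\<integral>s. exp (- eigval k * (T - s)) * Pk k s \<partial>MT T)"
    using assms unfolding final_coeff_def moment_eq by linarith
  then show ?thesis using err by simp
qed


end

lemma sin_basis_0[simp]: "sin_basis 0 x = 0"
  unfolding sin_basis_def by simp

lemma coeff_0[simp]: "coeff u0 0 = 0"
  unfolding coeff_def by simp

lemma pnc_from_approx:
  fixes e :: "nat \<Rightarrow> real" and F :: "nat \<Rightarrow> real \<Rightarrow> real \<Rightarrow> real"
  assumes T: "0 < T"
    and ctrl: "\<And>n. ctrl T x0 (e n) (F n)"
    and fc: "\<And>n k. k \<ge> 1 \<Longrightarrow> final_coeff T u0 (F n) k = 0"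
    and elim: "e \<longlonglongrightarrow> 0"
    and B: "\<And>n. sqrt (e n) * L2norm_QT T (F n) \<le> B"
  shows "pointwise_null_controllable x0 T u0"
proof -
  interpret MTf: finite_measure "MT T" by (rule MT_finite[OF T])
  interpret gs: gs_setup "MT T" "hk T x0"
    by unfold_locales (rule hk_sqi[OF T])
  define b where "b k = - exp (- eigval k * T) * coeff u0 k" for k
  have epos: "0 < e n" for n using ctrl[of n] by (simp add: ctrl_def)
  have NQn: "0 \<le> ctrl.NQ T (F n)" for n using ctrl.NQ_nonneg[OF ctrl[of n]] .
  have prodB: "sqrt (e n * ctrl.NQ T (F n)) \<le> B" for n
    using B[of n] ctrl.L2norm_eq[OF ctrl[of n]] epos[of n] NQn[of n] by (simp add: real_sqrt_mult)
  have eNQ: "e n * ctrl.NQ T (F n) \<le> B^2" for n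
  proof -
    have nn: "0 \<le> e n * ctrl.NQ T (F n)"
      using epos[of n] NQn[of n] by (intro mult_nonneg_nonneg) auto
    have "(sqrt (e n * ctrl.NQ T (F n)))^2 \<le> B^2"
      by (intro power_mono prodB) (use nn in simp)
    then show ?thesis using nn by simp
  qed
  have phisq: "sqi (MT T) (phi (F n))" for n by (rule ctrl.phi_sqi[OF ctrl[of n]])
  have phibnd: "ipr (MT T) (phi (F n)) (phi (F n)) \<le> 2 * B^2" for n
    using ctrl.phi_ipr[OF ctrl[of n]] eNQ[of n] by simp
  have lim: "(\<lambda>n. ipr (MT T) (hk T x0 k) (phi (F n))) \<longlonglongrightarrow> b k" for k
  proof (cases "k = 0")
    case True
    have "hk T x0 0 = (\<lambda>s. 0)" unfolding hk_def[abs_def] by simp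
    then show ?thesis using True by (simp add: b_def)
  next
    case False
    then have k1: "k \<ge> 1" by simp
    have z: "(\<lambda>n. ipr (MT T) (hk T x0 k) (phi (F n)) - b k) \<longlonglongrightarrow> 0"
    proof (rule Lim_null_comparison)
      show "\<forall>\<^sub>F n in sequentially. norm (ipr (MT T) (hk T x0 k) (phi (F n)) - b k) \<le> (ctrl.Lk k * sqrt (2 * T) * B) * e n"
      proof (intro always_eventually allI)
        fix n
        have "\<bar>ipr (MT T) (hk T x0 k) (phi (F n)) - b k\<bar> \<le> ctrl.Lk k * e n * sqrt (2 * e n * ctrl.NQ T (F n) * T)"
          unfolding b_def by (rule ctrl.ctrl_err[OF ctrl[of n] fc[OF k1]])
        also have "sqrt (2 * e n * ctrl.NQ T (F n) * T) = sqrt (2 * T) * sqrt (e n * ctrl.NQ T (F n))"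
          by (simp add: real_sqrt_mult[symmetric] ac_simps)
        also have "ctrl.Lk k * e n * (sqrt (2 * T) * sqrt (e n * ctrl.NQ T (F n))) \<le> ctrl.Lk k * e n * (sqrt (2 * T) * B)"
          using prodB[of n] ctrl.Lk_pos[OF ctrl[of n], of k] epos[of n] T
          by (intro mult_left_mono) auto
        finally show "norm (ipr (MT T) (hk T x0 k) (phi (F n)) - b k) \<le> (ctrl.Lk k * sqrt (2 * T) * B) * e n"
          by (simp add: ac_simps)
      qed
      show "(\<lambda>n. ctrl.Lk k * sqrt (2 * T) * B * e n) \<longlonglongrightarrow> 0"
        using tendsto_mult_left[OF elim, of "ctrl.Lk k * sqrt (2 * T) * B"] by simp
    qed
    have "(\<lambda>n. (ipr (MT T) (hk T x0 k) (phi (F n)) - b k) + b k) \<longlonglongrightarrow> 0 + b k"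
      by (intro tendsto_add z tendsto_const)
    then show ?thesis by simp
  qed
  obtain \<psi> where psi: "sqi (MT T) \<psi>" and mom: "\<And>k. ipr (MT T) (hk T x0 k) \<psi> = b k"
    using gs.weak_closed[OF phisq phibnd lim] by blast
  define chi where "chi s = indicator {0<..<T} s * \<psi> s" for s
  have psim: "\<psi> \<in> borel_measurable (restrict_space lborel {0<..<T})"
    using psi unfolding sqi_def MT_def by simp
  have chim: "chi \<in> borel_measurable lborel"
    using psim unfolding chi_def[abs_def]
    by (subst (asm) borel_measurable_restrict_space_iff) auto
  have "integrable (restrict_space lborel {0<..<T}) (\<lambda>s. (\<psi> s)^2)"
    using psi unfolding sqi_def MT_def by simp
  then have "integrable lborel (\<lambda>s. indicator {0<..<T} s *\<^sub>R (\<psi> s)^2)"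
    by (subst (asm) integrable_restrict_space) auto
  moreover have "(\<lambda>s. indicator {0<..<T} s *\<^sub>R (\<psi> s)^2) = (\<lambda>s. indicator {0<..<T} s *\<^sub>R (chi s)^2)"
    unfolding chi_def by (auto split: split_indicator)
  ultimately have chiint: "set_integrable lborel {0<..<T} (\<lambda>t. (chi t)^2)"
    unfolding set_integrable_def by simp
  have chimom: "exp (- eigval k * T) * coeff u0 k +
        sin_basis k x0 * (LINT s:{0<..<T}|lborel. exp (- eigval k * (T - s)) * chi s) = 0" for k
  proof -
    have "(LINT s:{0<..<T}|lborel. exp (- eigval k * (T - s)) * chi s)
        = (\<integral>s. indicator {0<..<T} s *\<^sub>R (exp (- eigval k * (T - s)) * \<psi> s) \<partial>lborel)"
      unfolding set_lebesgue_integral_def chi_def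
      by (intro Bochner_Integration.integral_cong refl) (auto split: split_indicator)
    also have "\<dots> = (\<integral>s. exp (- eigval k * (T - s)) * \<psi> s \<partial>MT T)"
      unfolding MT_def by (subst integral_restrict_space) auto
    finally have e1: "(LINT s:{0<..<T}|lborel. exp (- eigval k * (T - s)) * chi s)
        = (\<integral>s. exp (- eigval k * (T - s)) * \<psi> s \<partial>MT T)" .
    have "sin_basis k x0 * (\<integral>s. exp (- eigval k * (T - s)) * \<psi> s \<partial>MT T) = ipr (MT T) (hk T x0 k) \<psi>"
      unfolding ipr_def hk_def by (simp add: mult.assoc)
    then show ?thesis using mom[of k] unfolding e1 b_def by simp
  qed
  show ?thesis
    unfolding pointwise_null_controllable_def
    using chim chiint chimom by blast
qed

theorem theorem2:
  fixes x0 T :: real and u0 :: "real \<Rightarrow> real"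
    and \<psi> :: "real \<Rightarrow> real \<Rightarrow> real \<Rightarrow> real"
  assumes "0 < x0" and "x0 < 1" and "0 < T" and "ereal T \<le> T0 x0"
    and "is_L2_01 u0"
    and "\<not> pointwise_null_controllable x0 T u0"
    and "\<forall>\<epsilon>. 0 < \<epsilon> \<and> {x0 - \<epsilon><..<x0 + \<epsilon>} \<subseteq> {0<..<1} \<longrightarrow>
           optimal_null_control T {x0 - \<epsilon><..<x0 + \<epsilon>} u0 (\<psi> \<epsilon>)"
  shows "filterlim (\<lambda>\<epsilon>. sqrt \<epsilon> * L2norm_QT T (\<psi> \<epsilon>)) at_top (at_right 0)"
proof (rule ccontr)
  assume neg: "\<not> filterlim (\<lambda>\<epsilon>. sqrt \<epsilon> * L2norm_QT T (\<psi> \<epsilon>)) at_top (at_right 0)"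
  then obtain B where nB: "\<not> (\<forall>\<^sub>F \<epsilon> in at_right 0. B \<le> sqrt \<epsilon> * L2norm_QT T (\<psi> \<epsilon>))"
    unfolding filterlim_at_top by blast
  define d0 where "d0 = min x0 (1 - x0)"
  have d0: "0 < d0" using assms(1,2) by (simp add: d0_def)
  have ex: "\<exists>\<epsilon>. 0 < \<epsilon> \<and> \<epsilon> < min d0 (inverse (real (Suc n))) \<and> sqrt \<epsilon> * L2norm_QT T (\<psi> \<epsilon>) < B" for n
  proof (rule ccontr)
    assume na: "\<not> (\<exists>\<epsilon>. 0 < \<epsilon> \<and> \<epsilon> < min d0 (inverse (real (Suc n))) \<and> sqrt \<epsilon> * L2norm_QT T (\<psi> \<epsilon>) < B)"
    have all: "\<forall>y>0. y < min d0 (inverse (real (Suc n))) \<longrightarrow> B \<le> sqrt y * L2norm_QT T (\<psi> y)"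
    proof (intro allI impI)
      fix y :: real assume y: "0 < y" "y < min d0 (inverse (real (Suc n)))"
      show "B \<le> sqrt y * L2norm_QT T (\<psi> y)"
      proof (rule ccontr)
        assume "\<not> B \<le> sqrt y * L2norm_QT T (\<psi> y)"
        then have "sqrt y * L2norm_QT T (\<psi> y) < B" by simp
        with y na show False by blast
      qed
    qed
    have "\<forall>\<^sub>F \<epsilon> in at_right 0. B \<le> sqrt \<epsilon> * L2norm_QT T (\<psi> \<epsilon>)"
      unfolding eventually_at_right_field
      using d0 all by (intro exI[of _ "min d0 (inverse (real (Suc n)))"]) auto
    with nB show False by blast
  qed
  then obtain e where e: "\<And>n. 0 < e n \<and> e n < min d0 (inverse (real (Suc n))) \<and> sqrt (e n) * L2norm_QT T (\<psi> (e n)) < B"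
    by metis
  have sub: "{x0 - e n<..<x0 + e n} \<subseteq> {0<..<1}" for n
    using e[of n] unfolding d0_def by auto
  have onc: "optimal_null_control T {x0 - e n<..<x0 + e n} u0 (\<psi> (e n))" for n
    using assms(7) e[of n] sub[of n] by blast
  then have nc: "null_control T {x0 - e n<..<x0 + e n} u0 (\<psi> (e n))" for n
    by (simp add: optimal_null_control_def)
  have ctrl: "ctrl T x0 (e n) (\<psi> (e n))" for n
    using nc[of n] sub[of n] e[of n] assms(3)
    unfolding ctrl_def null_control_def is_L2_QT_def by blast
  have fc: "final_coeff T u0 (\<psi> (e n)) k = 0" if "k \<ge> 1" for n k
    using nc[of n] that unfolding null_control_def by blast
  have elim: "e \<longlonglongrightarrow> 0"
  proof (rule Lim_null_comparison)
    show "\<forall>\<^sub>F n in sequentially. norm (e n) \<le> inverse (real (Suc n))"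
      using e by (intro always_eventually allI) (simp add: less_imp_le)
    show "(\<lambda>n. inverse (real (Suc n))) \<longlonglongrightarrow> 0" by (rule LIMSEQ_inverse_real_of_nat)
  qed
  have B': "sqrt (e n) * L2norm_QT T (\<psi> (e n)) \<le> B" for n
    using e[of n] by simp
  have "pointwise_null_controllable x0 T u0"
    by (rule pnc_from_approx[OF assms(3) ctrl fc elim B'])
  with assms(6) show False by blast
qed

end
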